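(* Let $(\mathcal G_A,p^A)$ and $(\mathcal G_B,p^B)$ be CPS's on the finite set $\Omega$ (satisfying the standing assumptions), each satisfying certainty reflection and being $1$-closed. Fix an event $E$ and a state $\omega$ with $\omega\in E$. If $E$ is common certainty at $\omega$ (i.e., $\omega\in C^\infty$ computed with $q_A=q_B=1$), then $E$ is common knowledge at $\omega$ (i.e., $\omega\in K^\infty$ computed with $q_A=q_B=1$).
   Context: $\Omega$ is a finite set; every subset is an event. A CPS is a pair $(\mathcal G,p)$ where $\mathcal G$ is a family of nonempty subsets of $\Omega$ and $p$ assigns to each $G\in\mathcal G$ a probability measure $p_G$ on $\Omega$ with $p_G(G)=1$ and $p_G(E)=p_G(F)p_F(E)$ whenever $E\subseteq F\subseteq G$, $F,G\in\mathcal G$. Standing assumption: each conditioning family is closed under unions and nonempty intersections and covers $\Omega$. Atom: $m_i(\omega)=\bigcap\{G\in\mathcal G_i:\omega\in G\}$. $(\mathcal G_i,p^i)$ is $1$-closed if every $L\subseteq G$ with $G\in\mathcal G_i$ and $p^i_G(L)=1$ belongs to $\mathcal G_i$. Certainty reflection: for every event $E$, $q\in[0,1]$, $\omega$: $p^i_{m_i(\omega)}(E)=q$ implies $p^i_{m_i(\omega)}(\{\omega':p^i_{m_i(\omega')}(E)=q\})=1$. $C_i(F)=\{\omega:p^i_{m_i(\omega)}(F)=1\}$ and $K_i(F)=\{\omega: m_i(\omega)\subseteq F\}$. With $q_A=q_B=1$: $A^0=\{\omega:p^A_{m_A(\omega)}(E)=1\}$, $B^0=\{\omega:p^B_{m_B(\omega)}(E)=1\}$;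 $A^{n+1}=A^n\cap C_A(B^n)$, $B^{n+1}=B^n\cap C_B(A^n)$, $C^\infty=\bigcap_nA^n\cap\bigcap_nB^n$; and $A^{K,0}=A^0$, $B^{K,0}=B^0$, $A^{K,n+1}=A^{K,n}\cap K_A(B^{K,n})$, $B^{K,n+1}=B^{K,n}\cap K_B(A^{K,n})$, $K^\infty=\bigcap_nA^{K,n}\cap\bigcap_nB^{K,n}$. *)

theory Defs
  imports "HOL-Probability.Probability"
begin

text \<open>The finite state space \<Omega> is the universe of a finite type 'w; every subset is an event.
  A probability measure on \<Omega> is a pmf; p G is the measure p_G.\<close>

definition cprob :: "('w set \<Rightarrow> 'w pmf) \<Rightarrow> 'w set \<Rightarrow> 'w set \<Rightarrow> real" where
  "cprob p G E = measure_pmf.prob (p G) E"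

definition is_cps :: "'w set set \<Rightarrow> ('w set \<Rightarrow> 'w pmf) \<Rightarrow> bool" where
  "is_cps \<G> p \<longleftrightarrow>
     (\<forall>G\<in>\<G>. G \<noteq> {}) \<and>
     (\<forall>G\<in>\<G>. cprob p G G = 1) \<and>
     (\<forall>E F G. E \<subseteq> F \<longrightarrow> F \<subseteq> G \<longrightarrow> F \<in> \<G> \<longrightarrow> G \<in> \<G> \<longrightarrow>
        cprob p G E = cprob p G F * cprob p F E)"

text \<open>Standing assumption: closed under unions and nonempty intersections, covers \<Omega>
  (binary closure suffices since \<Omega> is finite).\<close>
definition standing :: "'w set set \<Rightarrow> bool" where
  "standing \<G> \<longleftrightarrow>
     (\<forall>F\<in>\<G>. \<forall>G\<in>\<G>. F \<union> G \<in> \<G>) \<and>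
     (\<forall>F\<in>\<G>. \<forall>G\<in>\<G>. F \<inter> G \<noteq> {} \<longrightarrow> F \<inter> G \<in> \<G>) \<and>
     \<Union>\<G> = UNIV"

definition atom :: "'w set set \<Rightarrow> 'w \<Rightarrow> 'w set" where
  "atom \<G> \<omega> = \<Inter>{G\<in>\<G>. \<omega> \<in> G}"

definition one_closed :: "'w set set \<Rightarrow> ('w set \<Rightarrow> 'w pmf) \<Rightarrow> bool" where
  "one_closed \<G> p \<longleftrightarrow> (\<forall>G\<in>\<G>. \<forall>L. L \<subseteq> G \<longrightarrow> cprob p G L = 1 \<longrightarrow> L \<in> \<G>)"

definition certainty_reflection :: "'w set set \<Rightarrow> ('w set \<Rightarrow> 'w pmf) \<Rightarrow> bool" where
  "certainty_reflection \<G> p \<longleftrightarrow>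
     (\<forall>E q \<omega>. 0 \<le> q \<longrightarrow> q \<le> 1 \<longrightarrow> cprob p (atom \<G> \<omega>) E = q \<longrightarrow>
        cprob p (atom \<G> \<omega>) {\<omega>'. cprob p (atom \<G> \<omega>') E = q} = 1)"

definition Cert :: "'w set set \<Rightarrow> ('w set \<Rightarrow> 'w pmf) \<Rightarrow> 'w set \<Rightarrow> 'w set" where
  "Cert \<G> p F = {\<omega>. cprob p (atom \<G> \<omega>) F = 1}"

definition Know :: "'w set set \<Rightarrow> 'w set \<Rightarrow> 'w set" where
  "Know \<G> F = {\<omega>. atom \<G> \<omega> \<subseteq> F}"

primrec iter :: "('w set \<Rightarrow> 'w set) \<Rightarrow> ('w set \<Rightarrow> 'w set) \<Rightarrow> 'w set \<Rightarrow> 'w set \<Rightarrow> nat \<Rightarrow> 'w set \<times> 'w set" where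
  "iter OpA OpB A0 B0 0 = (A0, B0)"
| "iter OpA OpB A0 B0 (Suc n) =
     (fst (iter OpA OpB A0 B0 n) \<inter> OpA (snd (iter OpA OpB A0 B0 n)),
      snd (iter OpA OpB A0 B0 n) \<inter> OpB (fst (iter OpA OpB A0 B0 n)))"

definition limit_set :: "('w set \<Rightarrow> 'w set) \<Rightarrow> ('w set \<Rightarrow> 'w set) \<Rightarrow> 'w set \<Rightarrow> 'w set \<Rightarrow> 'w set" where
  "limit_set OpA OpB A0 B0 =
     (\<Inter>n. fst (iter OpA OpB A0 B0 n)) \<inter> (\<Inter>n. snd (iter OpA OpB A0 B0 n))"

definition C_inf :: "'w set set \<Rightarrow> ('w set \<Rightarrow> 'w pmf) \<Rightarrow> 'w set set \<Rightarrow> ('w set \<Rightarrow> 'w pmf) \<Rightarrow> 'w set \<Rightarrow> 'w set" where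
  "C_inf GA pA GB pB E =
     limit_set (Cert GA pA) (Cert GB pB) (Cert GA pA E) (Cert GB pB E)"

definition K_inf :: "'w set set \<Rightarrow> ('w set \<Rightarrow> 'w pmf) \<Rightarrow> 'w set set \<Rightarrow> ('w set \<Rightarrow> 'w pmf) \<Rightarrow> 'w set \<Rightarrow> 'w set" where
  "K_inf GA pA GB pB E =
     limit_set (Know GA) (Know GB) (Cert GA pA E) (Cert GB pB E)"

end

theory Submission
  imports Defs
begin

lemma prob_int1:
  "cprob p G A = 1 \<Longrightarrow> cprob p G B = 1 \<Longrightarrow> cprob p G (A \<inter> B) = 1"
  unfolding cprob_def by (simp add: measure_pmf.measure_space_inter)

lemma prob_mono1:
  "cprob p G A = 1 \<Longrightarrow> A \<subseteq> B \<Longrightarrow> cprob p G B = 1"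
  unfolding cprob_def
  by (metis UNIV_I measure_pmf.finite_measure_mono measure_pmf.measure_ge_1_iff sets_measure_pmf)

lemma inter_in:
  assumes st: "standing \<G>" and "finite S" "S \<noteq> {}" "S \<subseteq> \<G>" "\<forall>G\<in>S. y \<in> G"
  shows "\<Inter>S \<in> \<G>"
  using assms(2-5)
proof (induction S rule: finite_ne_induct)
  case (singleton x) then show ?case by simp
next
  case (insert x F)
  then have "\<Inter>F \<in> \<G>" "x \<in> \<G>" "y \<in> x \<inter> \<Inter>F" by auto
  then have "x \<inter> \<Inter>F \<noteq> {}" by blast
  then show ?case using st \<open>\<Inter>F \<in> \<G>\<close> \<open>x \<in> \<G>\<close> unfolding standing_def
    by (simp add: Inter_insert)
qed

lemma atom_in:
  fixes \<G> :: "'w::finite set set"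
  assumes st: "standing \<G>"
  shows "atom \<G> y \<in> \<G>" "y \<in> atom \<G> y"
proof -
  have "y \<in> \<Union>\<G>" using st unfolding standing_def by auto
  then have ne: "{G\<in>\<G>. y \<in> G} \<noteq> {}" by auto
  show "atom \<G> y \<in> \<G>" unfolding atom_def
    by (rule inter_in[OF st]) (use ne in auto)
  show "y \<in> atom \<G> y" unfolding atom_def by auto
qed

lemma L1:
  fixes \<G> :: "'w::finite set set"
  assumes cps: "is_cps \<G> p" and st: "standing \<G>" and oc: "one_closed \<G> p"
    and "y \<in> F" "y \<in> Cert \<G> p F"
  shows "atom \<G> y \<subseteq> F"
proof -
  have m: "atom \<G> y \<in> \<G>" "y \<in> atom \<G> y" using atom_in[OF st] by auto
  have "cprob p (atom \<G> y) (atom \<G> y) = 1" using cps m unfolding is_cps_def by auto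
  moreover have "cprob p (atom \<G> y) F = 1" using assms(5) unfolding Cert_def by auto
  ultimately have "cprob p (atom \<G> y) (atom \<G> y \<inter> F) = 1" by (rule prob_int1)
  then have "atom \<G> y \<inter> F \<in> \<G>" using oc m unfolding one_closed_def by auto
  moreover have "y \<in> atom \<G> y \<inter> F" using m assms(4) by auto
  ultimately have "atom \<G> y \<subseteq> atom \<G> y \<inter> F" unfolding atom_def by blast
  then show ?thesis by auto
qed

lemma Cert_int: "Cert \<G> p X \<inter> Cert \<G> p Y \<subseteq> Cert \<G> p (X \<inter> Y)"
  unfolding Cert_def using prob_int1 by blast

lemma Cert_mono: "X \<subseteq> Y \<Longrightarrow> Cert \<G> p X \<subseteq> Cert \<G> p Y"
  unfolding Cert_def using prob_mono1 by blast

lemma Cert_intro: "certainty_reflection \<G> p \<Longrightarrow> Cert \<G> p X \<subseteq> Cert \<G> p (Cert \<G> p X)"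
  unfolding certainty_reflection_def Cert_def by auto

lemma Cert_Cert_int:
  assumes "certainty_reflection \<G> p" and "X \<subseteq> Cert \<G> p X"
  shows "X \<inter> Cert \<G> p Y \<subseteq> Cert \<G> p (X \<inter> Cert \<G> p Y)"
proof -
  have "X \<inter> Cert \<G> p Y \<subseteq> Cert \<G> p X \<inter> Cert \<G> p (Cert \<G> p Y)"
    using assms Cert_intro by blast
  also have "\<dots> \<subseteq> Cert \<G> p (X \<inter> Cert \<G> p Y)" by (rule Cert_int)
  finally show ?thesis .
qed

theorem theorem4:
  fixes GA GB :: "'w::finite set set"
    and pA pB :: "'w set \<Rightarrow> 'w pmf"
    and E :: "'w set" and \<omega> :: 'w
  assumes "is_cps GA pA" and "standing GA"
    and "certainty_reflection GA pA" and "one_closed GA pA"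
    and "is_cps GB pB" and "standing GB"
    and "certainty_reflection GB pB" and "one_closed GB pB"
    and "\<omega> \<in> E"
    and "\<omega> \<in> C_inf GA pA GB pB E"
  shows "\<omega> \<in> K_inf GA pA GB pB E"
proof -
  let ?CA = "Cert GA pA" and ?CB = "Cert GB pB"
  let ?it = "iter ?CA ?CB (?CA E) (?CB E)"
  let ?A = "\<lambda>n. fst (?it n)" and ?B = "\<lambda>n. snd (?it n)"
  let ?kt = "iter (Know GA) (Know GB) (?CA E) (?CB E)"
  define Z where "Z = E \<inter> C_inf GA pA GB pB E"
  have intro: "?A n \<subseteq> ?CA (?A n) \<and> ?B n \<subseteq> ?CB (?B n)" for n
  proof (induction n)
    case 0 then show ?case using Cert_intro[OF assms(3), of E] Cert_intro[OF assms(7), of E] by simp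
  next
    case (Suc n) then show ?case
      using Cert_Cert_int[OF assms(3), of "?A n" "?B n"] Cert_Cert_int[OF assms(7), of "?B n" "?A n"] by simp
  qed
  have Zdef: "y \<in> Z \<longleftrightarrow> y \<in> E \<and> (\<forall>n. y \<in> ?A n \<and> y \<in> ?B n)" for y
    unfolding Z_def C_inf_def limit_set_def by auto
  have closA: "atom GA y \<subseteq> Z" if y: "y \<in> Z" for y
  proof -
    have yn: "y \<in> ?A n" "y \<in> ?B n" for n using y Zdef by auto
    have "atom GA y \<subseteq> E"
      using L1[OF assms(1,2,4)] y yn(1)[of 0] Zdef by auto
    moreover have "atom GA y \<subseteq> ?A n" for n
      using L1[OF assms(1,2,4)] yn(1)[of n] intro[of n] by auto
    moreover have "atom GA y \<subseteq> ?B n" for n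
      using L1[OF assms(1,2,4), of y "?B n"] yn(1)[of "Suc n"] yn(2)[of n] by auto
    ultimately show ?thesis using Zdef by blast
  qed
  have closB: "atom GB y \<subseteq> Z" if y: "y \<in> Z" for y
  proof -
    have yn: "y \<in> ?A n" "y \<in> ?B n" for n using y Zdef by auto
    have "atom GB y \<subseteq> E"
      using L1[OF assms(5,6,8)] y yn(2)[of 0] Zdef by auto
    moreover have "atom GB y \<subseteq> ?B n" for n
      using L1[OF assms(5,6,8)] yn(2)[of n] intro[of n] by auto
    moreover have "atom GB y \<subseteq> ?A n" for n
      using L1[OF assms(5,6,8), of y "?A n"] yn(2)[of "Suc n"] yn(1)[of n] by auto
    ultimately show ?thesis using Zdef by blast
  qed
  have K: "Z \<subseteq> fst (?kt n) \<and> Z \<subseteq> snd (?kt n)" for n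
  proof (induction n)
    case 0
    have "Z \<subseteq> ?A 0 \<inter> ?B 0" using Zdef by blast
    then show ?case by simp
  next
    case (Suc n)
    then show ?case using closA closB unfolding Know_def by (simp; blast)
  qed
  have "\<omega> \<in> Z" using assms(9,10) Z_def by auto
  then show ?thesis using K unfolding K_inf_def limit_set_def by blast
qed

end
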